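(* Let $K\ge 1$ and $d_0,d_1,\ldots,d_K\in\mathbb{N}$ with $d_0=n$. Let $\{(x^i,y^i): i\in[m]\}\subset\mathbb{R}^n\times\{0,1\}$ be a set of labeled training samples such that $\|x^i\|_2\le r$ for all $i\in[m]$, and let $\ell:\{0,1\}\times\mathbb{R}^{d_K}\to\mathbb{R}$ be a loss function. For $\lambda\in\mathbb{R}$ let $\sigma_\lambda:\mathbb{R}\to\{0,1\}$ be given by $\sigma_\lambda(\alpha)=0$ if $\alpha<\lambda$ and $\sigma_\lambda(\alpha)=1$ otherwise, applied componentwise to vectors. Consider the training problem $$\min \sum_{i=1}^m \ell(y^i,z^i)\quad\text{s.t.}\quad z^i=\sigma_{\lambda_K}\big(W^K\sigma_{\lambda_{K-1}}(W^{K-1}\cdots\sigma_{\lambda_1}(W^1x^i)\cdots)\big)\ \forall i\in[m],\quad W^k\in\mathbb{R}^{d_k\times d_{k-1}},\ \lambda_k\in\mathbb{R}\ \forall k\in[K].$$ Then this problem is equivalent to the mixed-integer nonlinear program $$\min \sum_{i=1}^m \ell(y^i,u^{i,K})$$ subject to $$W^1x^i< M_1u^{i,1}+\mathbf{1}\lambda_1,\qquad W^1x^i\ge M_1(u^{i,1}-\mathbf{1})+\mathbf{1}\lambda_1\qquad \forall i\in[m],$$ $$W^ku^{i,k-1}< M_ku^{i,k}+\mathbf{1}\lambda_k,\qquad W^ku^{i,k-1}\ge M_k(u^{i,k}-\mathbf{1})+\mathbf{1}\lambda_k\qquad \forall k\in[K]\setminus\{1\},\ i\in[m],$$ $$W^k\in[-1,1]^{d_k\times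 d_{k-1}},\ \lambda_k\in[-1,1]\quad\forall k\in[K],\qquad u^{i,k}\in\{0,1\}^{d_k}\quad\forall i\in[m],\ k\in[K],$$ where $M_1:=nr+1$, $M_k:=d_{k-1}+1$ for $k\ge2$, $\mathbf{1}$ denotes the all-ones vector, and the inequalities between vectors are componentwise (the variable $u^{i,K}$ plays the role of the network output $z^i$).
   Context: $[p]:=\{1,\ldots,p\}$ for $p\in\mathbb{N}$. The function $z\mapsto \sigma_{\lambda_K}(W^K\sigma_{\lambda_{K-1}}(\cdots\sigma_{\lambda_1}(W^1x)\cdots))$ is a neural network with binary threshold activation functions, weight matrices $W^k$ and learnable thresholds $\lambda_k$ (one scalar threshold per layer). *)

theory Defs
  imports Complex_Main
begin

definition sigma :: "real \<Rightarrow> real \<Rightarrow> real" where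
  "sigma lam a = (if a < lam then 0 else 1)"

text \<open>Vectors in R^p are represented as functions nat => real whose entries at
indices >= p are 0.  Weights: W k j l is entry (j,l) of W^k (layers k = 1..K),
lam k is the threshold of layer k, d k the width of layer k (d 0 = n).
net W lam d k x is the output of the first k layers on input x.\<close>
fun net :: "(nat \<Rightarrow> nat \<Rightarrow> nat \<Rightarrow> real) \<Rightarrow> (nat \<Rightarrow> real) \<Rightarrow> (nat \<Rightarrow> nat) \<Rightarrow> nat
             \<Rightarrow> (nat \<Rightarrow> real) \<Rightarrow> (nat \<Rightarrow> real)" where
  "net W lam d 0 x = x"
| "net W lam d (Suc k) x =
     (\<lambda>j. if j < d (Suc k)
          then sigma (lam (Suc k)) (\<Sum>l<d k. W (Suc k) j l * net W lam d k x l)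
          else 0)"

end

theory Submission
  imports Defs
begin


lemma sigma_scale: "c > 0 \<Longrightarrow> sigma (c * lam) (c * a) = sigma lam a"
  by (simp add: sigma_def)

lemma net_scale:
  assumes "\<forall>k. c k > (0::real)"
  shows "net (\<lambda>k j l. c k * W k j l) (\<lambda>k. c k * lam k) d k x = net W lam d k x"
proof (induction k)
  case 0 then show ?case by simp
next
  case (Suc k)
  have "(\<Sum>l<d k. c (Suc k) * W (Suc k) j l * net W lam d k x l)
      = c (Suc k) * (\<Sum>l<d k. W (Suc k) j l * net W lam d k x l)" for j
    by (simp add: sum_distrib_left mult.assoc)
  then show ?case using Suc assms sigma_scale by (auto intro!: ext)
qed

lemma net_unfold: "k \<ge> 1 \<Longrightarrow> net W lam d k x j =
   (if j < d k then sigma (lam k) (\<Sum>l<d (k-1). W k j l * net W lam d (k-1) x l) else 0)"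
  by (cases k) auto

lemma net_vals: "k \<ge> 1 \<Longrightarrow> j < d k \<Longrightarrow> net W lam d k x j \<in> {0,1}"
  by (subst net_unfold) (auto simp: sigma_def)

lemma net_zero: "k \<ge> 1 \<Longrightarrow> j \<ge> d k \<Longrightarrow> net W lam d k x j = 0"
  by (subst net_unfold) auto

lemma bigM_sigma:
  fixes u s M lam :: real
  assumes "u \<in> {0,1}" "s < M*u + lam" "s \<ge> M*(u-1)+lam"
  shows "u = sigma lam s"
  using assms by (auto simp: sigma_def)

lemma layers_back:
  fixes u :: "nat \<Rightarrow> nat \<Rightarrow> real"
  assumes U: "\<forall>k\<in>{1..K}. \<forall>j. (j < d k \<longrightarrow> u k j \<in> {0, 1}) \<and> (j \<ge> d k \<longrightarrow> u k j = 0)"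
    and L1: "\<forall>j<d 1. (\<Sum>l<d 0. W 1 j l * x l) < M1 * u 1 j + lam 1
              \<and> (\<Sum>l<d 0. W 1 j l * x l) \<ge> M1 * (u 1 j - 1) + lam 1"
    and LK: "\<forall>k\<in>{2..K}. \<forall>j<d k.
                (\<Sum>l<d (k - 1). W k j l * u (k - 1) l) < (real (d (k - 1)) + 1) * u k j + lam k
              \<and> (\<Sum>l<d (k - 1). W k j l * u (k - 1) l) \<ge> (real (d (k - 1)) + 1) * (u k j - 1) + lam k"
  shows "k \<in> {1..K} \<Longrightarrow> u k = net W lam d k x"
proof (induction k)
  case 0 then show ?case by simp
next
  case (Suc k)
  show ?case
  proof (rule ext)
    fix j
    show "u (Suc k) j = net W lam d (Suc k) x j"
    proof (cases "j < d (Suc k)")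
      case False
      then show ?thesis using U Suc.prems by auto
    next
      case True
      show ?thesis
      proof (cases "k = 0")
        case True
        have "u 1 j \<in> {0,1}" using U Suc.prems True \<open>j < d (Suc k)\<close> by auto
        then have "u 1 j = sigma (lam 1) (\<Sum>l<d 0. W 1 j l * x l)"
          using L1 True \<open>j < d (Suc k)\<close> by (intro bigM_sigma) auto
        then show ?thesis using True \<open>j < d (Suc k)\<close> by simp
      next
        case False
        then have IH: "u k = net W lam d k x" using Suc by auto
        have "Suc k \<in> {2..K}" using False Suc.prems by auto
        have "u (Suc k) j \<in> {0,1}" using U Suc.prems \<open>j < d (Suc k)\<close> by auto
        moreover have "(\<Sum>l<d k. W (Suc k) j l * u k l) < (real (d k) + 1) * u (Suc k) j + lam (Suc k)
              \<and> (\<Sum>l<d k. W (Suc k) j l * u k l) \<ge> (real (d k) + 1) * (u (Suc k) j - 1) + lam (Suc k)"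
          using LK \<open>Suc k \<in> {2..K}\<close> \<open>j < d (Suc k)\<close> by fastforce
        ultimately have "u (Suc k) j = sigma (lam (Suc k)) (\<Sum>l<d k. W (Suc k) j l * u k l)"
          by (intro bigM_sigma) auto
        then show ?thesis using IH \<open>j < d (Suc k)\<close> by simp
      qed
    qed
  qed
qed

theorem lemma1:
  fixes K n m :: nat and d :: "nat \<Rightarrow> nat" and r :: real
    and x :: "nat \<Rightarrow> nat \<Rightarrow> real" and y :: "nat \<Rightarrow> nat"
    and loss :: "nat \<Rightarrow> (nat \<Rightarrow> real) \<Rightarrow> real"
  assumes "K \<ge> 1"
    and "d 0 = n"
    and "\<forall>i<m. y i \<in> {0, 1}"
    and "\<forall>i<m. sqrt (\<Sum>l<n. (x i l)\<^sup>2) \<le> r"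
  shows "{(\<Sum>i<m. loss (y i) (net W lam d K (x i))) | W lam. True}
       = {(\<Sum>i<m. loss (y i) (u i K)) | W lam u.
            (\<forall>k\<in>{1..K}. \<forall>j<d k. \<forall>l<d (k - 1). W k j l \<in> {-1..1})
          \<and> (\<forall>k\<in>{1..K}. lam k \<in> {-1..1})
          \<and> (\<forall>i<m. \<forall>k\<in>{1..K}. \<forall>j. (j < d k \<longrightarrow> u i k j \<in> {0, 1}) \<and> (j \<ge> d k \<longrightarrow> u i k j = 0))
          \<and> (\<forall>i<m. \<forall>j<d 1.
                (\<Sum>l<n. W 1 j l * x i l) < (real n * r + 1) * u i 1 j + lam 1
              \<and> (\<Sum>l<n. W 1 j l * x i l) \<ge> (real n * r + 1) * (u i 1 j - 1) + lam 1)
          \<and> (\<forall>k\<in>{2..K}. \<forall>i<m. \<forall>j<d k.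
                (\<Sum>l<d (k - 1). W k j l * u i (k - 1) l) < (real (d (k - 1)) + 1) * u i k j + lam k
              \<and> (\<Sum>l<d (k - 1). W k j l * u i (k - 1) l) \<ge> (real (d (k - 1)) + 1) * (u i k j - 1) + lam k)}"
proof (rule set_eqI, rule iffI)
  fix v
  assume "v \<in> {(\<Sum>i<m. loss (y i) (net W lam d K (x i))) | W lam. True}"
  then obtain W lam where v: "v = (\<Sum>i<m. loss (y i) (net W lam d K (x i)))" by blast
  define A where "A k = 1 + (\<Sum>j<d k. \<Sum>l<d (k-1). \<bar>W k j l\<bar>) + \<bar>lam k\<bar>" for k
  define c where "c k = 1 / (2 * A k)" for k
  have Apos: "A k \<ge> 1" for k unfolding A_def by (simp add: sum_nonneg)
  have cpos: "\<forall>k. c k > 0" using Apos unfolding c_def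
    by (metis divide_pos_pos less_le_trans mult_pos_pos zero_less_one zero_less_numeral)
  define W' where "W' = (\<lambda>k j l. c k * W k j l)"
  define lam' where "lam' = (\<lambda>k. c k * lam k)"
  define u where "u = (\<lambda>i k. net W' lam' d k (x i))"
  have neteq: "net W' lam' d k z = net W lam d k z" for k z
    unfolding W'_def lam'_def using net_scale[OF cpos] by blast
  have cA: "c k * A k = 1/2" for k using Apos[of k] unfolding c_def by simp
  have hW: "\<bar>W' k j l\<bar> \<le> 1/2" if "j < d k" "l < d (k-1)" for k j l
  proof -
    have "\<bar>W k j l\<bar> \<le> (\<Sum>l<d (k-1). \<bar>W k j l\<bar>)"
      by (rule member_le_sum) (use that in auto)
    also have "\<dots> \<le> (\<Sum>j<d k. \<Sum>l<d (k-1). \<bar>W k j l\<bar>)"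
      by (rule member_le_sum[where f="\<lambda>j. \<Sum>l<d (k-1). \<bar>W k j l\<bar>"]) (use that in \<open>auto intro: sum_nonneg\<close>)
    finally have "\<bar>W k j l\<bar> \<le> A k" unfolding A_def by simp
    then have "c k * \<bar>W k j l\<bar> \<le> c k * A k" using cpos by (simp add: mult_left_mono less_imp_le)
    then show ?thesis using cA cpos[rule_format, of k] unfolding W'_def by (simp add: abs_mult abs_of_pos)
  qed
  have hl: "\<bar>lam' k\<bar> \<le> 1/2" for k
  proof -
    have "\<bar>lam k\<bar> \<le> A k" unfolding A_def by (simp add: sum_nonneg)
    then have "c k * \<bar>lam k\<bar> \<le> c k * A k" using cpos by (simp add: mult_left_mono less_imp_le)
    then show ?thesis using cA cpos[rule_format, of k] unfolding lam'_def by (simp add: abs_mult abs_of_pos)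
  qed
  have uvals: "\<forall>i<m. \<forall>k\<in>{1..K}. \<forall>j. (j < d k \<longrightarrow> u i k j \<in> {0, 1}) \<and> (j \<ge> d k \<longrightarrow> u i k j = 0)"
    unfolding u_def using net_vals net_zero by auto
  have L1: "\<forall>i<m. \<forall>j<d 1.
                (\<Sum>l<n. W' 1 j l * x i l) < (real n * r + 1) * u i 1 j + lam' 1
              \<and> (\<Sum>l<n. W' 1 j l * x i l) \<ge> (real n * r + 1) * (u i 1 j - 1) + lam' 1"
  proof (intro allI impI)
    fix i j assume i: "i < m" and j: "j < d 1"
    have r0: "r \<ge> 0" using assms(4) i by (meson order.trans real_sqrt_ge_zero sum_nonneg zero_le_power2)
    have xl: "\<bar>x i l\<bar> \<le> r" if "l < n" for l
    proof -
      have "(x i l)\<^sup>2 \<le> (\<Sum>l<n. (x i l)\<^sup>2)"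
        by (rule member_le_sum) (use that in auto)
      then have "sqrt ((x i l)\<^sup>2) \<le> sqrt (\<Sum>l<n. (x i l)\<^sup>2)" using real_sqrt_le_mono by blast
      then show ?thesis using assms(4) i by (metis order.trans real_sqrt_abs)
    qed
    have "\<bar>\<Sum>l<n. W' 1 j l * x i l\<bar> \<le> (\<Sum>l<n. \<bar>W' 1 j l * x i l\<bar>)" by (rule sum_abs)
    also have "\<dots> \<le> (\<Sum>l<n. 1/2 * r)"
    proof (rule sum_mono)
      fix l assume "l \<in> {..<n}"
      then have "\<bar>W' 1 j l\<bar> \<le> 1/2" "\<bar>x i l\<bar> \<le> r" using hW[of j 1 l] j assms(2) xl by auto
      then show "\<bar>W' 1 j l * x i l\<bar> \<le> 1/2 * r" unfolding abs_mult using mult_mono[of "\<bar>W' 1 j l\<bar>" "1/2" "\<bar>x i l\<bar>" r] by simp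
    qed
    finally have sb: "\<bar>\<Sum>l<n. W' 1 j l * x i l\<bar> \<le> real n * r / 2" by simp
    have nr: "real n * r \<ge> 0" using r0 by simp
    have ueq: "u i 1 j = sigma (lam' 1) (\<Sum>l<n. W' 1 j l * x i l)"
      unfolding u_def using j assms(2) by (simp add: net_unfold)
    show "(\<Sum>l<n. W' 1 j l * x i l) < (real n * r + 1) * u i 1 j + lam' 1
              \<and> (\<Sum>l<n. W' 1 j l * x i l) \<ge> (real n * r + 1) * (u i 1 j - 1) + lam' 1"
      using sb nr hl[of 1] unfolding ueq sigma_def by (auto simp: abs_le_iff)
  qed
  have LK: "\<forall>k\<in>{2..K}. \<forall>i<m. \<forall>j<d k.
                (\<Sum>l<d (k - 1). W' k j l * u i (k - 1) l) < (real (d (k - 1)) + 1) * u i k j + lam' k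
              \<and> (\<Sum>l<d (k - 1). W' k j l * u i (k - 1) l) \<ge> (real (d (k - 1)) + 1) * (u i k j - 1) + lam' k"
  proof (intro ballI allI impI)
    fix k i j assume k: "k \<in> {2..K}" and i: "i < m" and j: "j < d k"
    have "\<bar>\<Sum>l<d (k-1). W' k j l * u i (k-1) l\<bar> \<le> (\<Sum>l<d (k-1). \<bar>W' k j l * u i (k-1) l\<bar>)" by (rule sum_abs)
    also have "\<dots> \<le> (\<Sum>l<d (k-1). 1/2)"
    proof (rule sum_mono)
      fix l assume l: "l \<in> {..<d (k-1)}"
      have "u i (k-1) l \<in> {0,1}" using uvals[rule_format, OF i, of "k-1" l] k l by fastforce
      then have "\<bar>u i (k-1) l\<bar> \<le> 1" by auto
      moreover have "\<bar>W' k j l\<bar> \<le> 1/2" using hW[of j k l] j l by auto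
      ultimately show "\<bar>W' k j l * u i (k-1) l\<bar> \<le> 1/2"
        unfolding abs_mult using mult_mono[of "\<bar>W' k j l\<bar>" "1/2" "\<bar>u i (k-1) l\<bar>" 1] by simp
    qed
    finally have sb: "\<bar>\<Sum>l<d (k-1). W' k j l * u i (k-1) l\<bar> \<le> real (d (k-1)) / 2" by simp
    have ueq: "u i k j = sigma (lam' k) (\<Sum>l<d (k-1). W' k j l * u i (k-1) l)"
      unfolding u_def using j k by (simp add: net_unfold)
    show "(\<Sum>l<d (k - 1). W' k j l * u i (k - 1) l) < (real (d (k - 1)) + 1) * u i k j + lam' k
              \<and> (\<Sum>l<d (k - 1). W' k j l * u i (k - 1) l) \<ge> (real (d (k - 1)) + 1) * (u i k j - 1) + lam' k"
      using sb hl[of k] unfolding ueq sigma_def abs_le_iff by auto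
  qed
  have v': "v = (\<Sum>i<m. loss (y i) (u i K))" unfolding v u_def neteq by simp
  have bW: "\<forall>k\<in>{1..K}. \<forall>j<d k. \<forall>l<d (k - 1). W' k j l \<in> {-1..1}"
  proof (intro ballI allI impI)
    fix k j l assume "j < d k" "l < d (k-1)"
    then have "\<bar>W' k j l\<bar> \<le> 1/2" by (rule hW)
    then show "W' k j l \<in> {-1..1}" unfolding abs_le_iff by auto
  qed
  have bl: "\<forall>k\<in>{1..K}. lam' k \<in> {-1..1}" 
  proof
    fix k show "lam' k \<in> {-1..1}" using hl[of k] unfolding abs_le_iff by auto
  qed
  show "v \<in> {(\<Sum>i<m. loss (y i) (u i K)) | W lam u.
            (\<forall>k\<in>{1..K}. \<forall>j<d k. \<forall>l<d (k - 1). W k j l \<in> {-1..1})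
          \<and> (\<forall>k\<in>{1..K}. lam k \<in> {-1..1})
          \<and> (\<forall>i<m. \<forall>k\<in>{1..K}. \<forall>j. (j < d k \<longrightarrow> u i k j \<in> {0, 1}) \<and> (j \<ge> d k \<longrightarrow> u i k j = 0))
          \<and> (\<forall>i<m. \<forall>j<d 1.
                (\<Sum>l<n. W 1 j l * x i l) < (real n * r + 1) * u i 1 j + lam 1
              \<and> (\<Sum>l<n. W 1 j l * x i l) \<ge> (real n * r + 1) * (u i 1 j - 1) + lam 1)
          \<and> (\<forall>k\<in>{2..K}. \<forall>i<m. \<forall>j<d k.
                (\<Sum>l<d (k - 1). W k j l * u i (k - 1) l) < (real (d (k - 1)) + 1) * u i k j + lam k
              \<and> (\<Sum>l<d (k - 1). W k j l * u i (k - 1) l) \<ge> (real (d (k - 1)) + 1) * (u i k j - 1) + lam k)}"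
    apply (rule CollectI)
    apply (rule exI[of _ W'], rule exI[of _ lam'], rule exI[of _ u])
    using v' bW bl uvals L1 LK by (intro conjI) assumption+
next
  fix v
  assume "v \<in> {(\<Sum>i<m. loss (y i) (u i K)) | W lam u.
            (\<forall>k\<in>{1..K}. \<forall>j<d k. \<forall>l<d (k - 1). W k j l \<in> {-1..1})
          \<and> (\<forall>k\<in>{1..K}. lam k \<in> {-1..1})
          \<and> (\<forall>i<m. \<forall>k\<in>{1..K}. \<forall>j. (j < d k \<longrightarrow> u i k j \<in> {0, 1}) \<and> (j \<ge> d k \<longrightarrow> u i k j = 0))
          \<and> (\<forall>i<m. \<forall>j<d 1.
                (\<Sum>l<n. W 1 j l * x i l) < (real n * r + 1) * u i 1 j + lam 1
              \<and> (\<Sum>l<n. W 1 j l * x i l) \<ge> (real n * r + 1) * (u i 1 j - 1) + lam 1)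
          \<and> (\<forall>k\<in>{2..K}. \<forall>i<m. \<forall>j<d k.
                (\<Sum>l<d (k - 1). W k j l * u i (k - 1) l) < (real (d (k - 1)) + 1) * u i k j + lam k
              \<and> (\<Sum>l<d (k - 1). W k j l * u i (k - 1) l) \<ge> (real (d (k - 1)) + 1) * (u i k j - 1) + lam k)}"
  then obtain W lam u where v: "v = (\<Sum>i<m. loss (y i) (u i K))"
    and U: "\<forall>i<m. \<forall>k\<in>{1..K}. \<forall>j. (j < d k \<longrightarrow> u i k j \<in> {0, 1}) \<and> (j \<ge> d k \<longrightarrow> u i k j = 0)"
    and L1: "\<forall>i<m. \<forall>j<d 1.
                (\<Sum>l<n. W 1 j l * x i l) < (real n * r + 1) * u i 1 j + lam 1
              \<and> (\<Sum>l<n. W 1 j l * x i l) \<ge> (real n * r + 1) * (u i 1 j - 1) + lam 1"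
    and LK: "\<forall>k\<in>{2..K}. \<forall>i<m. \<forall>j<d k.
                (\<Sum>l<d (k - 1). W k j l * u i (k - 1) l) < (real (d (k - 1)) + 1) * u i k j + lam k
              \<and> (\<Sum>l<d (k - 1). W k j l * u i (k - 1) l) \<ge> (real (d (k - 1)) + 1) * (u i k j - 1) + lam k"
    by blast
  have "u i K = net W lam d K (x i)" if i: "i < m" for i
  proof (rule layers_back[where u="u i"])
    show "\<forall>k\<in>{1..K}. \<forall>j. (j < d k \<longrightarrow> u i k j \<in> {0, 1}) \<and> (j \<ge> d k \<longrightarrow> u i k j = 0)"
      using U i by blast
    show "\<forall>j<d 1. (\<Sum>l<d 0. W 1 j l * x i l) < (real n * r + 1) * u i 1 j + lam 1
              \<and> (\<Sum>l<d 0. W 1 j l * x i l) \<ge> (real n * r + 1) * (u i 1 j - 1) + lam 1"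
      using L1 i assms(2) by simp
    show "\<forall>k\<in>{2..K}. \<forall>j<d k.
                (\<Sum>l<d (k - 1). W k j l * u i (k - 1) l) < (real (d (k - 1)) + 1) * u i k j + lam k
              \<and> (\<Sum>l<d (k - 1). W k j l * u i (k - 1) l) \<ge> (real (d (k - 1)) + 1) * (u i k j - 1) + lam k"
      using LK i by blast
    show "K \<in> {1..K}" using assms(1) by simp
  qed
  then have "v = (\<Sum>i<m. loss (y i) (net W lam d K (x i)))" unfolding v by simp
  then show "v \<in> {(\<Sum>i<m. loss (y i) (net W lam d K (x i))) | W lam. True}" by blast
qed

end
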